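(* If $n \ge m \ge 2$, then $\mathrm{sg_e}(K_{n,m}) \ge n$. Moreover, $\mathrm{sg_e}(K_{n,n}) \ge n+1$ for every $n\ge 2$.
   Context: All graphs are finite, simple and connected. A set $S \subseteq V(G)$ is a strong edge geodetic set of $G$ if one can assign to every unordered pair $\{u,v\}$ of distinct vertices of $S$ either one shortest $u,v$-path $P_{uv}$ in $G$ or no path, in such a way that every edge of $G$ lies on at least one of the assigned paths. The strong edge geodetic number $\mathrm{sg_e}(G)$ is the minimum cardinality of a strong edge geodetic set of $G$. $K_{n,m}$ denotes the complete bipartite graph with parts of sizes $n$ and $m$. *)

theory Defs
  imports Main
begin

text \<open>Simple graphs are given by a vertex set V and a set E of edges, each edge
  being a two-element set of vertices.\<close>

definition is_path :: "'a set \<Rightarrow> 'a set set \<Rightarrow> 'a list \<Rightarrow> bool" where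
  "is_path V E p \<longleftrightarrow> p \<noteq> [] \<and> set p \<subseteq> V \<and> distinct p \<and>
     (\<forall>i. Suc i < length p \<longrightarrow> {p ! i, p ! Suc i} \<in> E)"

definition path_edges :: "'a list \<Rightarrow> 'a set set" where
  "path_edges p = {{p ! i, p ! Suc i} | i. Suc i < length p}"

definition is_shortest_path :: "'a set \<Rightarrow> 'a set set \<Rightarrow> 'a \<Rightarrow> 'a \<Rightarrow> 'a list \<Rightarrow> bool" where
  "is_shortest_path V E u v p \<longleftrightarrow> is_path V E p \<and> hd p = u \<and> last p = v \<and>
     (\<forall>q. is_path V E q \<and> hd q = u \<and> last q = v \<longrightarrow> length p \<le> length q)"

text \<open>P assigns to each unordered pair {u,v} of distinct vertices of S either
  a shortest u,v-path (Some p) or no path (None).\<close>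
definition strong_edge_geodetic :: "'a set \<Rightarrow> 'a set set \<Rightarrow> 'a set \<Rightarrow> bool" where
  "strong_edge_geodetic V E S \<longleftrightarrow> S \<subseteq> V \<and>
     (\<exists>P :: 'a set \<Rightarrow> 'a list option.
        (\<forall>u\<in>S. \<forall>v\<in>S. u \<noteq> v \<longrightarrow>
            (case P {u, v} of None \<Rightarrow> True
             | Some p \<Rightarrow> is_shortest_path V E u v p \<or> is_shortest_path V E v u p)) \<and>
        (\<forall>e\<in>E. \<exists>u\<in>S. \<exists>v\<in>S. u \<noteq> v \<and> (\<exists>p. P {u, v} = Some p \<and> e \<in> path_edges p)))"

definition sg_e :: "'a set \<Rightarrow> 'a set set \<Rightarrow> nat" where
  "sg_e V E = (LEAST k. \<exists>S. strong_edge_geodetic V E S \<and> card S = k)"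

definition Kbip_V :: "nat \<Rightarrow> nat \<Rightarrow> (nat + nat) set" where
  "Kbip_V n m = Inl ` {..<n} \<union> Inr ` {..<m}"

definition Kbip_E :: "nat \<Rightarrow> nat \<Rightarrow> (nat + nat) set set" where
  "Kbip_E n m = {{Inl i, Inr j} | i j. i < n \<and> j < m}"

end

theory Submission imports Defs begin

lemma pe2: "path_edges [a,b] = {{a,b}}"
  unfolding path_edges_def by (auto simp: less_Suc_eq)

lemma pe3: "path_edges [a,b,c] = {{a,b},{b,c}}"
  unfolding path_edges_def
proof (auto simp: less_Suc_eq)
  show "\<exists>i. {a, b} = {[a, b, c] ! i, [b, c] ! i} \<and> (i = 0 \<or> i = Suc 0)" by (rule exI[of _ 0]) simp
  show "\<exists>i. {b, c} = {[a, b, c] ! i, [b, c] ! i} \<and> (i = 0 \<or> i = Suc 0)" by (rule exI[of _ 1]) simp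
qed

lemma path_len2:
  assumes "is_path V E q" "hd q = u" "last q = v" "u \<noteq> v"
  shows "length q \<ge> 2"
proof -
  have "q \<noteq> []" using assms(1) by (simp add: is_path_def)
  moreover have "length q \<noteq> 1"
  proof
    assume "length q = 1"
    then obtain a where "q = [a]" by (metis One_nat_def length_0_conv length_Suc_conv)
    thus False using assms by simp
  qed
  ultimately show ?thesis by (metis One_nat_def length_0_conv less_2_cases not_less)
qed

lemma KE_iff: "e \<in> Kbip_E n m \<longleftrightarrow> (\<exists>i j. i < n \<and> j < m \<and> e = {Inl i, Inr j})"
  unfolding Kbip_E_def by auto

lemma KE_pair: "{a, b} \<in> Kbip_E n m \<Longrightarrow>
   (\<exists>i j. i < n \<and> j < m \<and> ((a = Inl i \<and> b = Inr j) \<or> (a = Inr j \<and> b = Inl i)))"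
  unfolding KE_iff by (auto simp: doubleton_eq_iff)

lemma KE_simp1[simp]: "{Inl i, Inr j} \<in> Kbip_E n m \<longleftrightarrow> i < n \<and> j < m"
  unfolding KE_iff by (auto simp: doubleton_eq_iff)
lemma KE_simp2[simp]: "{Inr j, Inl i} \<in> Kbip_E n m \<longleftrightarrow> i < n \<and> j < m"
  unfolding KE_iff by (auto simp: doubleton_eq_iff)
lemma KE_simp3[simp]: "{Inl i, Inl j} \<notin> Kbip_E n m"
  unfolding KE_iff by (auto simp: doubleton_eq_iff)
lemma KE_simp4[simp]: "{Inr i, Inr j} \<notin> Kbip_E n m"
  unfolding KE_iff by (auto simp: doubleton_eq_iff)

lemma isp2: "is_path V E [a,b] \<longleftrightarrow> a \<in> V \<and> b \<in> V \<and> a \<noteq> b \<and> {a,b} \<in> E"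
  unfolding is_path_def by (auto simp: less_Suc_eq)
lemma isp3: "is_path V E [a,b,c] \<longleftrightarrow> a \<in> V \<and> b \<in> V \<and> c \<in> V \<and> a \<noteq> b \<and> a \<noteq> c \<and> b \<noteq> c
   \<and> {a,b} \<in> E \<and> {b,c} \<in> E"
  unfolding is_path_def by (auto simp: less_Suc_eq)

lemma short3:
  assumes "n \<ge> 1" "m \<ge> 1" "u \<in> Kbip_V n m" "v \<in> Kbip_V n m" "u \<noteq> v"
    "is_shortest_path (Kbip_V n m) (Kbip_E n m) u v q"
  shows "length q \<le> 3"
proof -
  have "\<exists>r. is_path (Kbip_V n m) (Kbip_E n m) r \<and> hd r = u \<and> last r = v \<and> length r \<le> 3"
  proof -
    from assms(3,4,5) consider (a) i j where "u = Inl i" "v = Inr j" "i < n" "j < m"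
      | (b) i j where "u = Inr j" "v = Inl i" "i < n" "j < m"
      | (c) i j where "u = Inl i" "v = Inl j" "i < n" "j < n" "i \<noteq> j"
      | (d) i j where "u = Inr i" "v = Inr j" "i < m" "j < m" "i \<noteq> j"
      unfolding Kbip_V_def by blast
    then show ?thesis
    proof cases
      case a thus ?thesis by (intro exI[of _ "[u,v]"]) (auto simp: isp2 Kbip_V_def)
    next
      case b thus ?thesis by (intro exI[of _ "[u,v]"]) (auto simp: isp2 Kbip_V_def)
    next
      case c thus ?thesis using assms(2)
        by (intro exI[of _ "[u,Inr 0,v]"]) (auto simp: isp3 Kbip_V_def)
    next
      case d thus ?thesis using assms(1)
        by (intro exI[of _ "[u,Inl 0,v]"]) (auto simp: isp3 Kbip_V_def)
    qed
  qed
  then obtain r where "is_path (Kbip_V n m) (Kbip_E n m) r" "hd r = u" "last r = v" "length r \<le> 3"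
    by blast
  with assms(6) show ?thesis unfolding is_shortest_path_def by force
qed

lemma cov:
  assumes "n \<ge> 1" "m \<ge> 1" "u \<in> Kbip_V n m" "v \<in> Kbip_V n m" "u \<noteq> v"
    "is_shortest_path (Kbip_V n m) (Kbip_E n m) u v q \<or> is_shortest_path (Kbip_V n m) (Kbip_E n m) v u q"
    "e \<in> path_edges q"
  shows "(\<exists>a b. q = [a,b] \<and> e = {a,b} \<and> {a,b} = {u,v}) \<or>
         (\<exists>a b c. q = [a,b,c] \<and> {a,c} = {u,v} \<and> (e = {a,b} \<or> e = {b,c}) \<and>
             is_path (Kbip_V n m) (Kbip_E n m) [a,b,c])"
proof -
  obtain u' v' where uv: "{u',v'} = {u,v}" "u' \<noteq> v'" "u' \<in> Kbip_V n m" "v' \<in> Kbip_V n m"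
    and sp: "is_shortest_path (Kbip_V n m) (Kbip_E n m) u' v' q"
    using assms(3-6) by (metis insert_commute)
  have l3: "length q \<le> 3" using short3[OF assms(1,2) uv(3,4,2) sp] .
  have pq: "is_path (Kbip_V n m) (Kbip_E n m) q" "hd q = u'" "last q = v'"
    using sp unfolding is_shortest_path_def by auto
  have l2: "length q \<ge> 2" using path_len2[OF pq uv(2)] .
  have "length q = 2 \<or> length q = 3" using l2 l3 by linarith
  then show ?thesis
  proof
    assume "length q = 2"
    then obtain a b where q: "q = [a,b]"
      by (metis (no_types, lifting) One_nat_def Suc_1 length_0_conv length_Suc_conv)
    then show ?thesis using pq uv assms(7) by (auto simp: pe2)
  next
    assume "length q = 3"
    then obtain a b c where q: "q = [a,b,c]"
      by (metis (no_types, lifting) numeral_3_eq_3 length_0_conv length_Suc_conv)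
    then show ?thesis using pq uv assms(7) by (auto simp: pe3)
  qed
qed

lemma countlem:
  fixes P :: "'a set \<Rightarrow> 'b option" and f :: "'b \<Rightarrow> 'c"
  assumes "finite X" "finite Y"
    and D: "D = {e. e \<subseteq> X \<and> card e = 2}"
    and H: "\<forall>y\<in>Y. \<forall>x\<in>X. \<exists>e q. e \<in> D \<and> P e = Some q \<and> f q = y \<and> x \<in> e"
  shows "card Y * card X \<le> card X * (card X - 1)"
proof -
  define Q where "Q y = {e\<in>D. \<exists>q. P e = Some q \<and> f q = y}" for y
  have finD: "finite D" using assms(1) D by (auto intro: finite_subset[of _ "Pow X"])
  have finQ: "finite (Q y)" for y using finD unfolding Q_def by auto
  have c2: "card e = 2" if "e \<in> Q y" for e y using that unfolding Q_def D by auto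
  have "card X \<le> 2 * card (Q y)" if "y \<in> Y" for y
  proof -
    have "X \<subseteq> \<Union>(Q y)" using H that unfolding Q_def by blast
    hence "card X \<le> card (\<Union>(Q y))"
      using finQ c2 by (intro card_mono) (auto intro!: finite_Union simp: card_ge_0_finite)
    also have "\<dots> \<le> (\<Sum>e\<in>Q y. card e)" by (rule card_Union_le_sum_card)
    also have "\<dots> = (\<Sum>e\<in>Q y. 2)" using c2 by (intro sum.cong) auto
    finally show ?thesis by simp
  qed
  hence "card Y * card X \<le> (\<Sum>y\<in>Y. 2 * card (Q y))"
    using sum_mono[of Y "\<lambda>_. card X"] by auto
  also have "\<dots> = 2 * card (\<Union>y\<in>Y. Q y)"
    using assms(2) finQ by (subst card_UN_disjoint) (auto simp: Q_def sum_distrib_left)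
  also have "\<dots> \<le> 2 * card D"
    using finD by (intro mult_le_mono2 card_mono) (auto simp: Q_def)
  also have "card D = card X choose 2" unfolding D using n_subsets[OF assms(1)] by simp
  also have "2 * (card X choose 2) = card X * (card X - 1)"
  proof -
    have "even (card X * (card X - 1))" by (cases "even (card X)") auto
    thus ?thesis by (simp add: choose_two)
  qed
  finally show ?thesis .
qed

lemma interior:
  assumes "n \<ge> 1" "m \<ge> 1" "S \<subseteq> Kbip_V n m"
    and P1: "\<forall>u\<in>S. \<forall>v\<in>S. u \<noteq> v \<longrightarrow>
            (case P {u, v} of None \<Rightarrow> True
             | Some p \<Rightarrow> is_shortest_path (Kbip_V n m) (Kbip_E n m) u v p \<or> is_shortest_path (Kbip_V n m) (Kbip_E n m) v u p)"
    and P2: "\<forall>e\<in>Kbip_E n m. \<exists>u\<in>S. \<exists>v\<in>S. u \<noteq> v \<and> (\<exists>p. P {u, v} = Some p \<and> e \<in> path_edges p)"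
    and e: "e \<in> Kbip_E n m"
  shows "e \<inter> S \<noteq> {}"
    and "y \<notin> S \<Longrightarrow> e = {x,y} \<Longrightarrow> \<exists>u v q. u \<in> S \<and> v \<in> S \<and> u \<noteq> v \<and> P {u,v} = Some q \<and> q ! 1 = y
            \<and> x \<in> {u,v} \<and> {u,y} \<in> Kbip_E n m \<and> {v,y} \<in> Kbip_E n m"
proof -
  obtain u v q where uv: "u \<in> S" "v \<in> S" "u \<noteq> v" "P {u,v} = Some q" "e \<in> path_edges q"
    using P2 e by blast
  have sp: "is_shortest_path (Kbip_V n m) (Kbip_E n m) u v q \<or> is_shortest_path (Kbip_V n m) (Kbip_E n m) v u q"
    using P1 uv by force
  have C: "(\<exists>a b. q = [a,b] \<and> e = {a,b} \<and> {a,b} = {u,v}) \<or>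
         (\<exists>a b c. q = [a,b,c] \<and> {a,c} = {u,v} \<and> (e = {a,b} \<or> e = {b,c}) \<and>
             is_path (Kbip_V n m) (Kbip_E n m) [a,b,c])"
    using cov[OF assms(1,2) _ _ uv(3) sp uv(5)] uv(1,2) assms(3) by blast
  show "e \<inter> S \<noteq> {}"
    using C uv(1,2) by (auto simp: doubleton_eq_iff)
  assume y: "y \<notin> S" and ex: "e = {x,y}"
  from C show "\<exists>u v q. u \<in> S \<and> v \<in> S \<and> u \<noteq> v \<and> P {u,v} = Some q \<and> q ! 1 = y
            \<and> x \<in> {u,v} \<and> {u,y} \<in> Kbip_E n m \<and> {v,y} \<in> Kbip_E n m"
  proof
    assume "\<exists>a b. q = [a,b] \<and> e = {a,b} \<and> {a,b} = {u,v}"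
    then have "y \<in> {u,v}" using ex by auto
    then show ?thesis using y uv by auto
  next
    assume "\<exists>a b c. q = [a,b,c] \<and> {a,c} = {u,v} \<and> (e = {a,b} \<or> e = {b,c}) \<and>
             is_path (Kbip_V n m) (Kbip_E n m) [a,b,c]"
    then obtain a b c where q: "q = [a,b,c]" "{a,c} = {u,v}" "e = {a,b} \<or> e = {b,c}"
      and ip: "is_path (Kbip_V n m) (Kbip_E n m) [a,b,c]" by blast
    have ac: "a \<in> S" "c \<in> S" using q(2) uv(1,2) by (auto simp: doubleton_eq_iff)
    have yb: "y = b" using q(3) ex y ac by (auto simp: doubleton_eq_iff)
    have xac: "x = a \<or> x = c" using q(3) ex yb ip by (auto simp: doubleton_eq_iff isp3)
    have E: "{a,b} \<in> Kbip_E n m" "{c,b} \<in> Kbip_E n m" using ip by (auto simp: isp3 insert_commute)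
    show ?thesis
      apply (rule exI[of _ a], rule exI[of _ c], rule exI[of _ q])
      using ac E yb xac q uv ip by (auto simp: isp3 insert_commute)
  qed
qed

lemma lower:
  assumes n: "n \<ge> 1" and m: "m \<ge> 1"
    and seg: "strong_edge_geodetic (Kbip_V n m) (Kbip_E n m) S"
  shows "card S \<ge> n \<and> (card S \<ge> n + 1 \<or> card S \<ge> m + 1)"
proof -
  define A where "A = (Inl ` {..<n} :: (nat+nat) set)"
  define B where "B = (Inr ` {..<m} :: (nat+nat) set)"
  have V: "Kbip_V n m = A \<union> B" unfolding A_def B_def Kbip_V_def ..
  have cA: "card A = n" unfolding A_def by (simp add: card_image)
  have cB: "card B = m" unfolding B_def by (simp add: card_image)
  have fA: "finite A" "finite B" unfolding A_def B_def by auto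
  have AB: "A \<inter> B = {}" unfolding A_def B_def by auto
  obtain P where SV: "S \<subseteq> Kbip_V n m"
    and P1: "\<forall>u\<in>S. \<forall>v\<in>S. u \<noteq> v \<longrightarrow>
            (case P {u, v} of None \<Rightarrow> True
             | Some p \<Rightarrow> is_shortest_path (Kbip_V n m) (Kbip_E n m) u v p \<or> is_shortest_path (Kbip_V n m) (Kbip_E n m) v u p)"
    and P2: "\<forall>e\<in>Kbip_E n m. \<exists>u\<in>S. \<exists>v\<in>S. u \<noteq> v \<and> (\<exists>p. P {u, v} = Some p \<and> e \<in> path_edges p)"
    using seg unfolding strong_edge_geodetic_def by blast
  note I = interior[OF n m SV P1 P2]
  have cS: "card S = card (A \<inter> S) + card (B \<inter> S)"
  proof -
    have "S = (A \<inter> S) \<union> (B \<inter> S)" using SV V by auto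
    hence "card S = card ((A \<inter> S) \<union> (B \<inter> S))" by simp
    also have "\<dots> = card (A \<inter> S) + card (B \<inter> S)" using fA AB by (intro card_Un_disjoint) auto
    finally show ?thesis .
  qed
  have cAS: "card (A \<inter> S) = n - card (A - S)"
  proof -
    have "card (A - S) = card A - card (A \<inter> S)" using fA by (intro card_Diff_subset_Int) auto
    moreover have "card (A \<inter> S) \<le> card A" using fA by (intro card_mono) auto
    ultimately show ?thesis using cA by linarith
  qed
  have cBS: "card (B \<inter> S) = m - card (B - S)"
  proof -
    have "card (B - S) = card B - card (B \<inter> S)" using fA by (intro card_Diff_subset_Int) auto
    moreover have "card (B \<inter> S) \<le> card B" using fA by (intro card_mono) auto
    ultimately show ?thesis using cB by linarith
  qed
  have hits: "\<forall>i<n. \<forall>j<m. Inl i \<in> S \<or> Inr j \<in> S"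
    using I(1) by (auto simp: KE_iff)
  show ?thesis
  proof (cases "A \<subseteq> S")
    case AS: True
    have n1: "card S \<ge> n" using cS AS cA by (simp add: Int_absorb2 Int_commute)
    show ?thesis
    proof (cases "B \<subseteq> S")
      case True
      then show ?thesis using AS cS cA cB m by (simp add: Int_absorb2 Int_commute)
    next
      case False
      have "card (B - S) * card A \<le> card A * (card A - 1)"
      proof (rule countlem[OF fA(1) _ refl, where P=P and f="\<lambda>q. q ! 1"])
        show "finite (B - S)" using fA by auto
        show "\<forall>y\<in>B - S. \<forall>x\<in>A. \<exists>e q. e \<in> {e. e \<subseteq> A \<and> card e = 2} \<and> P e = Some q \<and> q ! 1 = y \<and> x \<in> e"
        proof (intro ballI)
          fix y x assume y: "y \<in> B - S" and x: "x \<in> A"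
          have "{x,y} \<in> Kbip_E n m" using x y unfolding A_def B_def by auto
          from I(2)[OF this _ refl] y obtain u v q where
            uvq: "u \<in> S" "v \<in> S" "u \<noteq> v" "P {u,v} = Some q" "q ! 1 = y" "x \<in> {u,v}"
              "{u,y} \<in> Kbip_E n m" "{v,y} \<in> Kbip_E n m" by blast
          have "u \<in> A" "v \<in> A" using uvq(7,8) y unfolding A_def B_def
            by (auto dest!: KE_pair)
          thus "\<exists>e q. e \<in> {e. e \<subseteq> A \<and> card e = 2} \<and> P e = Some q \<and> q ! 1 = y \<and> x \<in> e"
            using uvq by (intro exI[of _ "{u,v}"] exI[of _ q]) auto
        qed
      qed
      hence "card (B - S) * n \<le> (n - 1) * n" using cA by (simp add: mult.commute)
      hence "card (B - S) \<le> n - 1" using n by simp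
      moreover have "card (B - S) \<le> m" using cB fA by (metis Diff_subset card_mono)
      ultimately have "card S \<ge> m + 1" using cS AS cA cBS n
        by (simp add: Int_absorb2 Int_commute)
      then show ?thesis using n1 by simp
    qed
  next
    case False
    then obtain a where a: "a \<in> A" "a \<notin> S" by blast
    have BS: "B \<subseteq> S" using hits a unfolding A_def B_def by auto
    have "card (A - S) * card B \<le> card B * (card B - 1)"
    proof (rule countlem[OF fA(2) _ refl, where P=P and f="\<lambda>q. q ! 1"])
      show "finite (A - S)" using fA by auto
      show "\<forall>y\<in>A - S. \<forall>x\<in>B. \<exists>e q. e \<in> {e. e \<subseteq> B \<and> card e = 2} \<and> P e = Some q \<and> q ! 1 = y \<and> x \<in> e"
      proof (intro ballI)
        fix y x assume y: "y \<in> A - S" and x: "x \<in> B"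
        have "{x,y} \<in> Kbip_E n m" using x y unfolding A_def B_def by auto
        from I(2)[OF this _ refl] y obtain u v q where
          uvq: "u \<in> S" "v \<in> S" "u \<noteq> v" "P {u,v} = Some q" "q ! 1 = y" "x \<in> {u,v}"
            "{u,y} \<in> Kbip_E n m" "{v,y} \<in> Kbip_E n m" by blast
        have "u \<in> B" "v \<in> B" using uvq(7,8) y unfolding A_def B_def
          by (auto dest!: KE_pair)
        thus "\<exists>e q. e \<in> {e. e \<subseteq> B \<and> card e = 2} \<and> P e = Some q \<and> q ! 1 = y \<and> x \<in> e"
          using uvq by (intro exI[of _ "{u,v}"] exI[of _ q]) auto
      qed
    qed
    hence "card (A - S) * m \<le> (m - 1) * m" using cB by (simp add: mult.commute)
    hence "card (A - S) \<le> m - 1" using m by simp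
    moreover have "card (A - S) \<le> n" using cA fA by (metis Diff_subset card_mono)
    ultimately have "card S \<ge> n + 1" using cS BS cB cAS m
      by (simp add: Int_absorb2 Int_commute)
    then show ?thesis by simp
  qed
qed

lemma exists_seg: "strong_edge_geodetic (Kbip_V n m) (Kbip_E n m) (Kbip_V n m)"
proof -
  define P where "P e = (if e \<in> Kbip_E n m then
      Some [SOME a. a \<in> e \<and> isl a, SOME b. b \<in> e \<and> \<not> isl b] else None)" for e :: "(nat+nat) set"
  have Pij: "P {Inl i, Inr j} = Some [Inl i, Inr j]" if "i < n" "j < m" for i j
  proof -
    have "(SOME a. a \<in> {Inl i, Inr j} \<and> isl a) = Inl i"
      by (rule some_equality) auto
    moreover have "(SOME a. a \<in> {Inl i, Inr j} \<and> \<not> isl a) = Inr j"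
      by (rule some_equality) auto
    ultimately show ?thesis using that unfolding P_def by simp
  qed
  have sp: "is_shortest_path (Kbip_V n m) (Kbip_E n m) (Inl i) (Inr j) [Inl i, Inr j]"
    if "i < n" "j < m" for i j
    unfolding is_shortest_path_def using that path_len2[of "Kbip_V n m" "Kbip_E n m" _ "Inl i" "Inr j"]
    by (auto simp: isp2 Kbip_V_def numeral_2_eq_2)
  show ?thesis unfolding strong_edge_geodetic_def
  proof (intro conjI exI[of _ P])
    show "\<forall>u\<in>Kbip_V n m. \<forall>v\<in>Kbip_V n m. u \<noteq> v \<longrightarrow>
            (case P {u, v} of None \<Rightarrow> True
             | Some p \<Rightarrow> is_shortest_path (Kbip_V n m) (Kbip_E n m) u v p \<or> is_shortest_path (Kbip_V n m) (Kbip_E n m) v u p)"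
    proof (intro ballI impI)
      fix u v assume "u \<in> Kbip_V n m" "v \<in> Kbip_V n m" "u \<noteq> v"
      show "case P {u, v} of None \<Rightarrow> True
             | Some p \<Rightarrow> is_shortest_path (Kbip_V n m) (Kbip_E n m) u v p \<or> is_shortest_path (Kbip_V n m) (Kbip_E n m) v u p"
      proof (cases "{u,v} \<in> Kbip_E n m")
        case True
        then obtain i j where "i < n" "j < m" "(u = Inl i \<and> v = Inr j) \<or> (u = Inr j \<and> v = Inl i)"
          using KE_pair by blast
        then show ?thesis using Pij sp by (auto simp: insert_commute)
      next
        case False
        then show ?thesis unfolding P_def by simp
      qed
    qed
    show "\<forall>e\<in>Kbip_E n m. \<exists>u\<in>Kbip_V n m. \<exists>v\<in>Kbip_V n m. u \<noteq> v \<and> (\<exists>p. P {u, v} = Some p \<and> e \<in> path_edges p)"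
    proof
      fix e assume "e \<in> Kbip_E n m"
      then obtain i j where "i < n" "j < m" "e = {Inl i, Inr j}" by (auto simp: KE_iff)
      then show "\<exists>u\<in>Kbip_V n m. \<exists>v\<in>Kbip_V n m. u \<noteq> v \<and> (\<exists>p. P {u, v} = Some p \<and> e \<in> path_edges p)"
        using Pij by (intro bexI[of _ "Inl i"] bexI[of _ "Inr j"]) (auto simp: pe2 Kbip_V_def)
    qed
  qed simp
qed

lemma sg_lower:
  assumes "n \<ge> 1" "m \<ge> 1"
  shows "sg_e (Kbip_V n m) (Kbip_E n m) \<ge> n \<and>
    (sg_e (Kbip_V n m) (Kbip_E n m) \<ge> n + 1 \<or> sg_e (Kbip_V n m) (Kbip_E n m) \<ge> m + 1)"
proof -
  have "\<exists>k S. strong_edge_geodetic (Kbip_V n m) (Kbip_E n m) S \<and> card S = k"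
    using exists_seg by blast
  hence "\<exists>S. strong_edge_geodetic (Kbip_V n m) (Kbip_E n m) S \<and> card S = sg_e (Kbip_V n m) (Kbip_E n m)"
    unfolding sg_e_def by (rule LeastI_ex)
  then obtain S where "strong_edge_geodetic (Kbip_V n m) (Kbip_E n m) S"
      "card S = sg_e (Kbip_V n m) (Kbip_E n m)"
    by blast
  then show ?thesis using lower[OF assms] by metis
qed

theorem mainTheorem4:
  shows "(\<forall>n m :: nat. n \<ge> m \<and> m \<ge> 2 \<longrightarrow> sg_e (Kbip_V n m) (Kbip_E n m) \<ge> n) \<and>
         (\<forall>n :: nat. n \<ge> 2 \<longrightarrow> sg_e (Kbip_V n n) (Kbip_E n n) \<ge> n + 1)"
proof (intro conjI allI impI)
  fix n m :: nat assume "m \<le> n \<and> 2 \<le> m"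
  then show "n \<le> sg_e (Kbip_V n m) (Kbip_E n m)" using sg_lower[of n m] by auto
next
  fix n :: nat assume "2 \<le> n"
  then show "n + 1 \<le> sg_e (Kbip_V n n) (Kbip_E n n)" using sg_lower[of n n] by auto
qed

end
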